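(* Let $S$ be a closed subspace of $\ell_\infty$ with $c_0\subseteq S$. If $S$ has weak$^*$ sequentially compact dual ball, then $S$ is not an $\ell_\infty$-Grothendieck subspace.
   Context: A Banach space $X$ has weak$^*$ sequentially compact dual ball if every sequence in the closed unit ball of $X^*$ has a $\sigma(X^*,X)$-convergent subsequence. Let $S$ be a closed subspace of $\ell_\infty$ containing $c_0$ and let $j:c_0\to S$ be the inclusion map; $j^{**}:c_0^{**}\equiv\ell_\infty\to S^{**}$ identifies $\ell_\infty$ with a subspace of $S^{**}$. A sequence $(x_n^* )$ in $S^*$ is $\sigma(S^*,\ell_\infty)$-convergent to $x^*$ if $\langle j^{**}z,x_n^*\rangle\to\langle j^{**}z,x^*\rangle$ for every $z\in\ell_\infty$. The closed subspace $S$ of $\ell_\infty$ is an $\ell_\infty$-Grothendieck subspace if $c_0\subseteq S$ and every $\sigma(S^*,S)$-convergent sequence in $S^*$ is $\sigma(S^*,\ell_\infty)$-convergent (to the same limit). *)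

theory Defs
  imports "HOL-Analysis.Analysis"
begin

text \<open>ell_infinity is modelled as the Banach space of bounded (automatically continuous,
  since nat is discrete) real sequences, with the sup norm.\<close>
type_synonym linf = "nat \<Rightarrow>\<^sub>C real"

definition c0 :: "linf set" where
  "c0 = {x. (\<lambda>n. apply_bcontfun x n) \<longlonglongrightarrow> 0}"

definition unit_seq :: "nat \<Rightarrow> linf" where
  "unit_seq k = Bcontfun (\<lambda>n. if n = k then 1 else 0)"

text \<open>The dual S* of a subspace S: bounded linear functionals on S (only values on S matter).\<close>
definition dual_sp :: "linf set \<Rightarrow> (linf \<Rightarrow> real) set" where
  "dual_sp S = {\<phi>. (\<forall>x\<in>S. \<forall>y\<in>S. \<phi> (x + y) = \<phi> x + \<phi> y)
      \<and> (\<forall>c. \<forall>x\<in>S. \<phi> (c *\<^sub>R x) = c * \<phi> x)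
      \<and> (\<exists>B. \<forall>x\<in>S. \<bar>\<phi> x\<bar> \<le> B * norm x)}"

definition dual_ball :: "linf set \<Rightarrow> (linf \<Rightarrow> real) set" where
  "dual_ball S = {\<phi> \<in> dual_sp S. \<forall>x\<in>S. \<bar>\<phi> x\<bar> \<le> norm x}"

definition weak_star_seq_compact_dual_ball :: "linf set \<Rightarrow> bool" where
  "weak_star_seq_compact_dual_ball S \<longleftrightarrow>
     (\<forall>\<phi> :: nat \<Rightarrow> linf \<Rightarrow> real. (\<forall>n. \<phi> n \<in> dual_ball S) \<longrightarrow>
        (\<exists>(r :: nat \<Rightarrow> nat) \<psi>. strict_mono r \<and> \<psi> \<in> dual_sp S \<and>
                (\<forall>x\<in>S. (\<lambda>n. \<phi> (r n) x) \<longlonglongrightarrow> \<psi> x)))"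

text \<open>Pairing of j** z (z in ell_infinity = c_0**) with x* in S*:
  <j** z, x*> = <z, j* x*> = sum_k z_k x*(e_k), via c_0* = ell_1.\<close>
definition bidual_pair :: "linf \<Rightarrow> (linf \<Rightarrow> real) \<Rightarrow> real" where
  "bidual_pair z \<phi> = (\<Sum>k. apply_bcontfun z k * \<phi> (unit_seq k))"

definition linf_Grothendieck_subspace :: "linf set \<Rightarrow> bool" where
  "linf_Grothendieck_subspace S \<longleftrightarrow> c0 \<subseteq> S \<and>
     (\<forall>(\<phi> :: nat \<Rightarrow> linf \<Rightarrow> real) \<psi>. (\<forall>n. \<phi> n \<in> dual_sp S) \<longrightarrow> \<psi> \<in> dual_sp S \<longrightarrow>
        (\<forall>x\<in>S. (\<lambda>n. \<phi> n x) \<longlonglongrightarrow> \<psi> x) \<longrightarrow>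
        (\<forall>z. (\<lambda>n. bidual_pair z (\<phi> n)) \<longlonglongrightarrow> bidual_pair z \<psi>))"

end

theory Submission
  imports Defs
begin

lemma unit_seq_apply: "apply_bcontfun (unit_seq k) m = (if m = k then 1 else 0)"
proof -
  have "(\<lambda>n::nat. if n = k then 1 else (0::real)) \<in> bcontfun"
    unfolding bcontfun_def
  proof (intro CollectI conjI)
    show "continuous_on UNIV (\<lambda>n::nat. if n = k then 1 else (0::real))"
      by (rule Topological_Spaces.continuous_on_discrete)
    have sub: "range (\<lambda>n::nat. if n = k then 1 else (0::real)) \<subseteq> {0,1}" by auto
    have bnd: "bounded {0::real,1}" by (rule finite_imp_bounded) simp
    from bnd sub show "bounded (range (\<lambda>n::nat. if n = k then 1 else (0::real)))"
      by (rule bounded_subset)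
  qed
  then show ?thesis unfolding unit_seq_def by (simp add: Bcontfun_inverse)
qed

theorem proposition3p6:
  fixes S :: "linf set"
  assumes "subspace S" and "closed S" and "c0 \<subseteq> S"
    and "weak_star_seq_compact_dual_ball S"
  shows "\<not> linf_Grothendieck_subspace S"
proof
  assume G: "linf_Grothendieck_subspace S"
  define \<phi> where "\<phi> = (\<lambda>(n::nat) (x::linf). apply_bcontfun x n)"
  have dsp: "\<phi> n \<in> dual_sp S" for n
  proof -
    have "\<bar>apply_bcontfun x n\<bar> \<le> 1 * norm x" for x :: linf
      using norm_bounded[of x n] by simp
    then show ?thesis
      unfolding dual_sp_def \<phi>_def
      by (simp add: plus_bcontfun.rep_eq scaleR_bcontfun.rep_eq) (metis mult_1)
  qed
  have nb: "\<bar>apply_bcontfun x n\<bar> \<le> norm x" for x :: linf and n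
    using norm_bounded[of x n] by simp
  have "\<phi> n \<in> dual_ball S" for n
    unfolding dual_ball_def using dsp nb by (auto simp: \<phi>_def)
  then obtain r \<psi> where r: "strict_mono r" and psi: "\<psi> \<in> dual_sp S"
    and conv: "\<forall>x\<in>S. (\<lambda>n. \<phi> (r n) x) \<longlonglongrightarrow> \<psi> x"
    using assms(4) unfolding weak_star_seq_compact_dual_ball_def by blast
  have uc0: "unit_seq k \<in> c0" for k
  proof -
    have "\<forall>\<^sub>F n in sequentially. apply_bcontfun (unit_seq k) n = 0"
      by (rule eventually_sequentiallyI[of "Suc k"]) (simp add: unit_seq_apply)
    then show ?thesis unfolding c0_def by (simp add: tendsto_eventually)
  qed
  have psi0: "\<psi> (unit_seq k) = 0" for k
  proof -
    have L1: "(\<lambda>n. \<phi> (r n) (unit_seq k)) \<longlonglongrightarrow> \<psi> (unit_seq k)"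
    proof -
      have "unit_seq k \<in> S" using uc0[of k] assms(3) by (rule subsetD[rotated])
      with conv show ?thesis by (rule bspec)
    qed
    have "\<forall>\<^sub>F n in sequentially. \<phi> (r n) (unit_seq k) = 0"
    proof (rule eventually_sequentiallyI[of "Suc k"])
      fix n assume "Suc k \<le> n"
      moreover have "n \<le> r n" using r by (simp add: seq_suble)
      ultimately show "\<phi> (r n) (unit_seq k) = 0" by (simp add: \<phi>_def unit_seq_apply)
    qed
    then have L2: "(\<lambda>n. \<phi> (r n) (unit_seq k)) \<longlonglongrightarrow> 0" by (simp add: tendsto_eventually)
    show ?thesis by (rule LIMSEQ_unique[OF L1 L2])
  qed
  define z :: linf where "z = const_bcontfun 1"
  have z1: "apply_bcontfun z k = 1" for k by (simp add: z_def const_bcontfun.rep_eq)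
  have "(\<lambda>n. bidual_pair z ((\<phi> \<circ> r) n)) \<longlonglongrightarrow> bidual_pair z \<psi>"
  proof -
    have GG: "\<And>(\<phi>' :: nat \<Rightarrow> linf \<Rightarrow> real) \<psi>'. (\<forall>n. \<phi>' n \<in> dual_sp S) \<Longrightarrow> \<psi>' \<in> dual_sp S \<Longrightarrow>
        (\<forall>x\<in>S. (\<lambda>n. \<phi>' n x) \<longlonglongrightarrow> \<psi>' x) \<Longrightarrow>
        (\<lambda>n. bidual_pair z (\<phi>' n)) \<longlonglongrightarrow> bidual_pair z \<psi>'"
      using G unfolding linf_Grothendieck_subspace_def by blast
    have "\<forall>n. (\<phi> \<circ> r) n \<in> dual_sp S" using dsp by simp
    moreover have "\<forall>x\<in>S. (\<lambda>n. (\<phi> \<circ> r) n x) \<longlonglongrightarrow> \<psi> x" using conv by simp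
    ultimately show ?thesis using GG[of "\<phi> \<circ> r" \<psi>] psi by blast
  qed
  moreover have "bidual_pair z ((\<phi> \<circ> r) n) = 1" for n
  proof -
    have "(\<lambda>k. if k = r n then 1 else (0::real)) sums 1"
      using sums_single[of "r n" "\<lambda>_. 1::real"] by simp
    moreover have "(\<lambda>k. apply_bcontfun z k * (\<phi> \<circ> r) n (unit_seq k)) = (\<lambda>k. if k = r n then 1 else 0)"
      by (auto simp: z1 \<phi>_def unit_seq_apply)
    ultimately show ?thesis unfolding bidual_pair_def by (simp add: sums_iff)
  qed
  moreover have "bidual_pair z \<psi> = 0"
    unfolding bidual_pair_def by (simp add: psi0)
  ultimately have "(\<lambda>n. 1::real) \<longlonglongrightarrow> 0" by simp
  then have "(1::real) = 0" by (rule LIMSEQ_unique[OF tendsto_const])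
  then show False by simp
qed

end
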